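(* Let $G_n=([n],E_n)$ be any finite undirected graph without isolated vertices, with degree vector $\boldsymbol{d}=(d_i)_{i\in[n]}$, and let $c\in(0,1)$. Let $\boldsymbol{R}=(R_i)_{i\in[n]}$ be the graph-normalized PageRank vector of $G_n$ with damping factor $c$. Then $$R_i\le d_i\qquad\text{for all } i\in[n].$$
   Context: $\boldsymbol{A}=(a_{ij})_{i,j\in[n]}\in\{0,1\}^{n\times n}$ is the (symmetric) adjacency matrix of $G_n$ and $d_i=\sum_j a_{ij}\ge 1$. Define the row-stochastic matrix $\boldsymbol{P}=(p_{ij})$ by $p_{ij}=a_{ij}/d_i$. The graph-normalized PageRank vector with damping factor $c\in(0,1)$ is the unique (row) vector $\boldsymbol{R}\in[0,n]^n$ solving $\boldsymbol{R}=c\,\boldsymbol{R}\boldsymbol{P}+(1-c)\boldsymbol{1}_n$, where $\boldsymbol{1}_n$ is the all-ones vector; equivalently $R_k=(1-c)\sum_{s=0}^\infty c^s\sum_{j=1}^n(\boldsymbol{P}^s)_{jk}$. *)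

theory Defs
  imports Complex_Main
begin

text \<open>Vertices of G_n are 0,...,n-1 (standing for [n]). Matrices are functions
  nat => nat => real, only entries with indices < n are meaningful.\<close>

definition degree :: "nat \<Rightarrow> (nat \<Rightarrow> nat \<Rightarrow> real) \<Rightarrow> nat \<Rightarrow> real" where
  "degree n A i = (\<Sum>j<n. A i j)"

definition trans_mat :: "nat \<Rightarrow> (nat \<Rightarrow> nat \<Rightarrow> real) \<Rightarrow> nat \<Rightarrow> nat \<Rightarrow> real" where
  "trans_mat n A i j = A i j / degree n A i"

fun mat_pow :: "nat \<Rightarrow> (nat \<Rightarrow> nat \<Rightarrow> real) \<Rightarrow> nat \<Rightarrow> nat \<Rightarrow> nat \<Rightarrow> real" where
  "mat_pow n P 0 = (\<lambda>i j. if i = j then 1 else 0)"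
| "mat_pow n P (Suc s) = (\<lambda>i j. \<Sum>k<n. mat_pow n P s i k * P k j)"

definition pagerank :: "nat \<Rightarrow> (nat \<Rightarrow> nat \<Rightarrow> real) \<Rightarrow> real \<Rightarrow> nat \<Rightarrow> real" where
  "pagerank n A c k = (1 - c) * (\<Sum>s. c ^ s * (\<Sum>j<n. mat_pow n (trans_mat n A) s j k))"

end

theory Submission
  imports Defs
begin

lemma mp_nonneg:
  assumes "\<forall>i<n. \<forall>j<n. P i j \<ge> 0"
  shows "j < n \<Longrightarrow> k < n \<Longrightarrow> mat_pow n P s j k \<ge> 0"
proof (induction s arbitrary: k)
  case 0 then show ?case by simp
next
  case (Suc s)
  then show ?case using assms by (auto intro!: sum_nonneg mult_nonneg_nonneg)
qed

lemma stat:
  assumes Asym: "\<forall>i<n. \<forall>j<n. A i j = A j i"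
    and pos: "\<forall>i<n. degree n A i \<ge> 1"
  shows "k < n \<Longrightarrow> (\<Sum>j<n. degree n A j * mat_pow n (trans_mat n A) s j k) = degree n A k"
proof (induction s arbitrary: k)
  case 0
  then show ?case by (simp add: if_distrib sum.delta cong: if_cong)
next
  case (Suc s)
  have "(\<Sum>j<n. degree n A j * mat_pow n (trans_mat n A) (Suc s) j k)
      = (\<Sum>j<n. \<Sum>m<n. degree n A j * mat_pow n (trans_mat n A) s j m * trans_mat n A m k)"
    by (simp add: sum_distrib_left mult.assoc)
  also have "\<dots> = (\<Sum>m<n. \<Sum>j<n. degree n A j * mat_pow n (trans_mat n A) s j m * trans_mat n A m k)"
    by (rule sum.swap)
  also have "\<dots> = (\<Sum>m<n. (\<Sum>j<n. degree n A j * mat_pow n (trans_mat n A) s j m) * trans_mat n A m k)"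
    by (simp add: sum_distrib_right)
  also have "\<dots> = (\<Sum>m<n. degree n A m * trans_mat n A m k)"
    using Suc.IH by simp
  also have "\<dots> = (\<Sum>m<n. A m k)"
  proof (rule sum.cong)
    fix m assume "m \<in> {..<n}"
    then have "degree n A m \<ge> 1" using pos by auto
    then show "degree n A m * trans_mat n A m k = A m k" by (simp add: trans_mat_def)
  qed simp
  also have "\<dots> = (\<Sum>m<n. A k m)" using Asym Suc.prems by simp
  also have "\<dots> = degree n A k" by (simp add: degree_def)
  finally show ?case .
qed

theorem mainTheorem1:
  fixes n :: nat and A :: "nat \<Rightarrow> nat \<Rightarrow> real" and c :: real
  assumes A01: "\<forall>i<n. \<forall>j<n. A i j \<in> {0, 1}"
    and Asym: "\<forall>i<n. \<forall>j<n. A i j = A j i"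
    and no_isolated: "\<forall>i<n. degree n A i \<ge> 1"
    and c_pos: "0 < c" and c_lt1: "c < 1"
  shows "\<forall>i<n. pagerank n A c i \<le> degree n A i"
proof (intro allI impI)
  fix k assume k: "k < n"
  define P where "P = trans_mat n A"
  have Pnn: "\<forall>i<n. \<forall>j<n. P i j \<ge> 0"
  proof (intro allI impI)
    fix i j assume "i < n" "j < n"
    then have "A i j \<ge> 0" "degree n A i \<ge> 1" using A01 no_isolated by force+
    then show "P i j \<ge> 0" by (simp add: P_def trans_mat_def)
  qed
  define v where "v s = (\<Sum>j<n. mat_pow n P s j k)" for s
  have v0: "v s \<ge> 0" for s
    unfolding v_def using mp_nonneg[OF Pnn] k by (auto intro!: sum_nonneg)
  have vd: "v s \<le> degree n A k" for s
  proof -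
    have "v s \<le> (\<Sum>j<n. degree n A j * mat_pow n P s j k)"
      unfolding v_def
    proof (rule sum_mono)
      fix j assume "j \<in> {..<n}"
      then have "degree n A j \<ge> 1" "mat_pow n P s j k \<ge> 0"
        using no_isolated mp_nonneg[OF Pnn] k by auto
      then show "mat_pow n P s j k \<le> degree n A j * mat_pow n P s j k"
        by (metis mult_le_cancel_right1 not_less order.strict_iff_not)
    qed
    also have "\<dots> = degree n A k" using stat[OF Asym no_isolated k] by (simp add: P_def)
    finally show ?thesis .
  qed
  have geo: "summable (\<lambda>s. c ^ s * degree n A k)"
    using c_pos c_lt1 by (intro summable_mult2 summable_geometric) simp
  have le: "c ^ s * v s \<le> c ^ s * degree n A k" for s
    using vd c_pos by (simp add: mult_left_mono)
  have sm: "summable (\<lambda>s. c ^ s * v s)"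
    by (rule summable_comparison_test'[OF geo, of 0]) (use v0 c_pos le in simp)
  have "(\<Sum>s. c ^ s * v s) \<le> (\<Sum>s. c ^ s * degree n A k)"
    by (rule suminf_le[OF le sm geo])
  also have "\<dots> = degree n A k / (1 - c)"
    using c_pos c_lt1 by (simp add: suminf_mult2[symmetric] suminf_geometric)
  finally have "(1 - c) * (\<Sum>s. c ^ s * v s) \<le> degree n A k"
    using c_lt1 by (simp add: field_simps)
  then show "pagerank n A c k \<le> degree n A k"
    by (simp add: pagerank_def v_def P_def)
qed

end
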